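(* Let $R_1,R_2,S_1,S_2$ be positive semidefinite $n\times n$ matrices such that $R_1R_2=R_2R_1$ and $S_1S_2=S_2S_1$. Let $R=R_1^{1/2}R_2^{1/2}$ and $S=S_1^{1/2}S_2^{1/2}$. Then $$\lambda_1\big((R^{1/2}SR^{1/2})^2\big)\le \lambda_1\big(R_1^{1/2}S_1R_1^{1/2}\,R_2^{1/2}S_2R_2^{1/2}\big).$$
   Context: $\lambda_1(X)$ denotes the largest eigenvalue of a matrix $X$ with real nonnegative spectrum. Note $R$ and $S$ are positive semidefinite since they are products of commuting positive semidefinite matrices. *)

theory Defs
  imports "Jordan_Normal_Form.Schur_Decomposition" "Jordan_Normal_Form.Spectral_Radius"
begin

definition psd_mat :: "nat \<Rightarrow> complex mat \<Rightarrow> bool" where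
  "psd_mat n A \<longleftrightarrow> A \<in> carrier_mat n n \<and> mat_adjoint A = A \<and>
     (\<forall>v \<in> carrier_vec n. 0 \<le> Re ((A *\<^sub>v v) \<bullet>c v))"

definition mat_sqrt :: "nat \<Rightarrow> complex mat \<Rightarrow> complex mat" where
  "mat_sqrt n A = (THE B. psd_mat n B \<and> B * B = A)"

definition lambda1 :: "complex mat \<Rightarrow> real" where
  "lambda1 X = Max (Re ` spectrum X)"

end

theory Submission
  imports Defs
begin


abbreviation adj :: "complex mat \<Rightarrow> complex mat" where "adj \<equiv> mat_adjoint"

lemma adj_def': "adj A = mat (dim_col A) (dim_row A) (\<lambda>(i,j). cnj (A $$ (j,i)))"
  unfolding mat_adjoint_def mat_of_rows_def
  by (rule eq_matI, auto simp: conjugate_vec_def)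

lemma adj_carrier[simp]: "A \<in> carrier_mat n m \<Longrightarrow> adj A \<in> carrier_mat m n"
  by (auto simp: adj_def')
lemma adj_dims[simp]: "dim_row (adj A) = dim_col A" "dim_col (adj A) = dim_row A"
  by (auto simp: adj_def')
lemma adj_index[simp]: "i < dim_col A \<Longrightarrow> j < dim_row A \<Longrightarrow> adj A $$ (i,j) = cnj (A $$ (j,i))"
  by (auto simp: adj_def')
lemma adj_adj[simp]: "adj (adj A) = A"
  by (rule eq_matI, auto)
lemma adj_one[simp]: "adj (1\<^sub>m n) = 1\<^sub>m n"
  by (rule eq_matI, auto)
lemma adj_mult: assumes "A \<in> carrier_mat n m" "B \<in> carrier_mat m k"
  shows "adj (A * B) = adj B * adj A"
  using assms by (intro eq_matI) (auto simp: scalar_prod_def ac_simps)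

lemma cip_adj: assumes "A \<in> carrier_mat n m" "x \<in> carrier_vec m" "y \<in> carrier_vec n"
  shows "(A *\<^sub>v x) \<bullet>c y = x \<bullet>c (adj A *\<^sub>v y)"
proof -
  have "(A *\<^sub>v x) \<bullet>c y = (\<Sum>i<n. \<Sum>j<m. A $$ (i,j) * x $ j * cnj (y $ i))"
    using assms by (simp add: scalar_prod_def sum_distrib_right row_def atLeast0LessThan)
  also have "\<dots> = (\<Sum>j<m. \<Sum>i<n. A $$ (i,j) * x $ j * cnj (y $ i))" by (rule sum.swap)
  also have "\<dots> = x \<bullet>c (adj A *\<^sub>v y)"
    using assms by (simp add: scalar_prod_def sum_distrib_left row_def atLeast0LessThan mult_ac)
  finally show ?thesis .
qed

lemma cip_sym: assumes "x \<in> carrier_vec n" "y \<in> carrier_vec n"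
  shows "x \<bullet>c y = cnj (y \<bullet>c x)"
  using assms by (simp add: scalar_prod_def mult.commute)

lemma cip_smult_l: assumes "x \<in> carrier_vec n" "y \<in> carrier_vec n"
  shows "(a \<cdot>\<^sub>v x) \<bullet>c y = a * (x \<bullet>c y)"
  using assms by (simp add: scalar_prod_def sum_distrib_left mult_ac)

lemma cip_smult_r: assumes "x \<in> carrier_vec n" "y \<in> carrier_vec n"
  shows "x \<bullet>c (a \<cdot>\<^sub>v y) = cnj a * (x \<bullet>c y)"
  using assms by (simp add: scalar_prod_def sum_distrib_left mult_ac)

lemma cip_zero_r[simp]: "x \<bullet>c 0\<^sub>v n = 0"
  by (simp add: scalar_prod_def)

lemma cip_self: assumes "x \<in> carrier_vec n"
  shows "x \<bullet>c x = complex_of_real (Re (x \<bullet>c x))" "Re (x \<bullet>c x) \<ge> 0"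
  using conjugate_square_ge_0_vec[of x] by (auto simp: less_eq_complex_def complex_eq_iff)

lemma cip_self_pos: assumes "x \<in> carrier_vec n" "x \<noteq> 0\<^sub>v n"
  shows "Re (x \<bullet>c x) > 0"
proof -
  have "x \<bullet>c x \<noteq> 0" using assms by simp
  then have "Re (x \<bullet>c x) \<noteq> 0" using cip_self[OF assms(1)] by (metis of_real_0)
  then show ?thesis using cip_self(2)[OF assms(1)] by linarith
qed

lemma herm_eig_real: assumes A: "A \<in> carrier_mat n n" and h: "adj A = A"
  and v: "v \<in> carrier_vec n" "v \<noteq> 0\<^sub>v n" and ev: "A *\<^sub>v v = e \<cdot>\<^sub>v v"
  shows "cnj e = e"
proof -
  have "(A *\<^sub>v v) \<bullet>c v = v \<bullet>c (A *\<^sub>v v)" using cip_adj[OF A v(1) v(1)] h by simp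
  then have "e * (v \<bullet>c v) = cnj e * (v \<bullet>c v)"
    using v by (simp add: ev cip_smult_l[of _ n] cip_smult_r[of _ n])
  moreover have "v \<bullet>c v \<noteq> 0" using v by simp
  ultimately show ?thesis by simp
qed

definition nrm :: "complex vec \<Rightarrow> complex vec" where
  "nrm w = complex_of_real (1 / sqrt (Re (w \<bullet>c w))) \<cdot>\<^sub>v w"

lemma nrm_carrier[simp]: "w \<in> carrier_vec n \<Longrightarrow> nrm w \<in> carrier_vec n"
  by (simp add: nrm_def)

lemma nrm_ip: assumes "w \<in> carrier_vec n" "w' \<in> carrier_vec n"
  shows "nrm w \<bullet>c nrm w' = complex_of_real (1 / sqrt (Re (w \<bullet>c w)) * (1 / sqrt (Re (w' \<bullet>c w')))) * (w \<bullet>c w')"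
  using assms by (simp add: nrm_def cip_smult_l[of _ n] cip_smult_r[of _ n])

lemma nrm_self: assumes "w \<in> carrier_vec n" "w \<noteq> 0\<^sub>v n"
  shows "nrm w \<bullet>c nrm w = 1"
proof -
  have p: "Re (w \<bullet>c w) > 0" by (rule cip_self_pos[OF assms])
  have "nrm w \<bullet>c nrm w = complex_of_real (1 / sqrt (Re (w \<bullet>c w)) * (1 / sqrt (Re (w \<bullet>c w)))) * complex_of_real (Re (w \<bullet>c w))"
    using nrm_ip[OF assms(1) assms(1)] cip_self(1)[OF assms(1)] by metis
  also have "\<dots> = complex_of_real (1 / sqrt (Re (w \<bullet>c w)) * (1 / sqrt (Re (w \<bullet>c w))) * Re (w \<bullet>c w))"
    by simp
  also have "1 / sqrt (Re (w \<bullet>c w)) * (1 / sqrt (Re (w \<bullet>c w))) * Re (w \<bullet>c w) = 1"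
    using p by (simp add: field_simps)
  finally show ?thesis by simp
qed

lemma nrm_id: assumes "w \<in> carrier_vec n" "w \<bullet>c w = 1" shows "nrm w = w"
  using assms by (simp add: nrm_def)

lemma orthonormal_mat: assumes vs: "set vs \<subseteq> carrier_vec n"
  and on: "\<And>i j. i < length vs \<Longrightarrow> j < length vs \<Longrightarrow> vs ! i \<bullet>c vs ! j = (if i = j then 1 else 0)"
  shows "adj (mat_of_cols n vs) * mat_of_cols n vs = 1\<^sub>m (length vs)"
proof (rule eq_matI)
  fix i j assume i: "i < dim_row (1\<^sub>m (length vs))" and j: "j < dim_col (1\<^sub>m (length vs))"
  then have i': "i < length vs" and j': "j < length vs" by auto
  have vi: "vs ! i \<in> carrier_vec n" and vj: "vs ! j \<in> carrier_vec n" using vs i' j' by auto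
  have "(adj (mat_of_cols n vs) * mat_of_cols n vs) $$ (i,j) = (\<Sum>k<n. cnj (vs ! i $ k) * vs ! j $ k)"
    using i' j' vi vj by (simp add: scalar_prod_def row_def col_def mat_of_cols_def atLeast0LessThan)
  also have "\<dots> = vs ! j \<bullet>c vs ! i"
    using vi vj by (simp add: scalar_prod_def atLeast0LessThan mult.commute)
  also have "\<dots> = 1\<^sub>m (length vs) $$ (i,j)" using on[OF j' i'] i' j' by auto
  finally show "(adj (mat_of_cols n vs) * mat_of_cols n vs) $$ (i,j) = 1\<^sub>m (length vs) $$ (i,j)" .
qed auto



lemma adj_mult_index: assumes M: "M \<in> carrier_mat n k" and i: "i < k" and j: "j < k"
  shows "(adj M * M) $$ (i,j) = col M j \<bullet>c col M i"
  using M i j by (simp add: scalar_prod_def row_def col_def mult.commute)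


lemma spectral:
  assumes "A \<in> carrier_mat n n" "adj A = A"
  shows "\<exists>U d. U \<in> carrier_mat n n \<and> adj U * U = 1\<^sub>m n \<and>
     (\<forall>i<n. A *\<^sub>v col U i = complex_of_real (d i) \<cdot>\<^sub>v col U i)"
  using assms
proof (induction n arbitrary: A)
  case 0
  then show ?case by (intro exI[of _ "1\<^sub>m 0"] exI[of _ "\<lambda>_. 0"]) auto
next
  case (Suc m A)
  let ?n = "Suc m"
  have A: "A \<in> carrier_mat ?n ?n" and h: "adj A = A" using Suc.prems by auto
  from spectrum_non_empty[OF A] obtain e where "eigenvalue A e" unfolding spectrum_def by auto
  then obtain v where v: "v \<in> carrier_vec ?n" "v \<noteq> 0\<^sub>v ?n" "A *\<^sub>v v = e \<cdot>\<^sub>v v"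
    unfolding eigenvalue_def eigenvector_def using A by auto
  have ereal: "cnj e = e" by (rule herm_eig_real[OF A h v])
  then have eRe: "e = complex_of_real (Re e)" by (simp add: complex_eq_iff)
  define u0 where "u0 = nrm v"
  have u0: "u0 \<in> carrier_vec ?n" "u0 \<bullet>c u0 = 1" unfolding u0_def using nrm_self v by auto
  have u00: "u0 \<noteq> 0\<^sub>v ?n" using u0 by auto
  have Au0: "A *\<^sub>v u0 = e \<cdot>\<^sub>v u0"
  proof -
    define c where "c = complex_of_real (1 / sqrt (Re (v \<bullet>c v)))"
    have "A *\<^sub>v u0 = c \<cdot>\<^sub>v (A *\<^sub>v v)" unfolding u0_def nrm_def c_def[symmetric]
      using A v by (simp add: mult_mat_vec)
    also have "\<dots> = e \<cdot>\<^sub>v u0" unfolding u0_def nrm_def c_def[symmetric] v(3)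
      by (simp add: smult_smult_assoc mult.commute)
    finally show ?thesis .
  qed
  interpret cof_vec_space ?n "TYPE(complex)" .
  define b where "b = basis_completion u0"
  from basis_completion[OF u0(1) u00, folded b_def]
  have dist_b: "distinct b" and indep: "\<not> lin_dep (set b)" and bc: "set b \<subseteq> carrier_vec ?n"
    and hdb: "hd b = u0" and lenb: "length b = ?n" by auto
  then obtain vs where bv: "b = u0 # vs" by (cases b) auto
  define ws where "ws = gram_schmidt ?n b"
  from gram_schmidt_result[OF bc dist_b indep ws_def]
  have ws: "corthogonal ws" "set ws \<subseteq> carrier_vec ?n" "length ws = ?n" by (auto simp: lenb)
  have hdws: "hd ws = u0" unfolding ws_def bv using gram_schmidt_hd u0(1) by simp
  then obtain wt where wsv: "ws = u0 # wt" using ws(3) by (cases ws) auto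
  define us where "us = map nrm wt"
  have nrmws: "map nrm ws = u0 # us" unfolding wsv us_def using nrm_id[OF u0] by simp
  have wsc: "\<And>i. i < ?n \<Longrightarrow> ws ! i \<in> carrier_vec ?n" using ws by auto
  have ws0: "\<And>i. i < ?n \<Longrightarrow> ws ! i \<noteq> 0\<^sub>v ?n"
    using corthogonalD[OF ws(1)] ws(3) by fastforce
  have on: "\<And>i j. i < ?n \<Longrightarrow> j < ?n \<Longrightarrow> (u0 # us) ! i \<bullet>c (u0 # us) ! j = (if i = j then 1 else 0)"
  proof -
    fix i j assume i: "i < ?n" and j: "j < ?n"
    have "(u0 # us) ! i \<bullet>c (u0 # us) ! j = nrm (ws ! i) \<bullet>c nrm (ws ! j)"
      unfolding nrmws[symmetric] using i j ws(3) by simp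
    also have "\<dots> = (if i = j then 1 else 0)"
    proof (cases "i = j")
      case True then show ?thesis using nrm_self[OF wsc ws0] i by simp
    next
      case False
      then have "ws ! i \<bullet>c ws ! j = 0" using corthogonalD[OF ws(1)] i j ws(3) by auto
      then show ?thesis using nrm_ip[OF wsc[OF i] wsc[OF j]] False by simp
    qed
    finally show "(u0 # us) ! i \<bullet>c (u0 # us) ! j = (if i = j then 1 else 0)" .
  qed
  have lenus: "length us = m" using ws(3) wsv us_def by simp
  have usc: "set us \<subseteq> carrier_vec ?n" using ws(2) wsv us_def by auto
  have usc': "\<And>k. k < m \<Longrightarrow> us ! k \<in> carrier_vec ?n" using usc lenus by auto
  define W where "W = mat_of_cols ?n (u0 # us)"
  define U2 where "U2 = mat_of_cols ?n us"
  have W: "W \<in> carrier_mat ?n ?n" unfolding W_def using mat_of_cols_carrier(1)[of ?n "u0#us"] lenus by simp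
  have U2: "U2 \<in> carrier_mat ?n m" unfolding U2_def using mat_of_cols_carrier(1)[of ?n us] lenus by simp
  have WW: "adj W * W = 1\<^sub>m ?n" unfolding W_def
    using orthonormal_mat[of "u0 # us" ?n] on usc u0 lenus by auto
  have WW': "W * adj W = 1\<^sub>m ?n" using mat_mult_left_right_inverse[OF adj_carrier[OF W] W WW] .
  have UU: "adj U2 * U2 = 1\<^sub>m m" unfolding U2_def
    using orthonormal_mat[of us ?n] on[of "Suc _" "Suc _"] usc lenus by auto
  define P0 where "P0 = mat ?n ?n (\<lambda>(i,j). u0 $ i * cnj (u0 $ j))"
  have P0: "P0 \<in> carrier_mat ?n ?n" unfolding P0_def by simp
  have decomp: "W * adj W = P0 + U2 * adj U2"
  proof (rule eq_matI)
    fix i j assume i: "i < dim_row (P0 + U2 * adj U2)" and j: "j < dim_col (P0 + U2 * adj U2)"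
    then have i: "i < ?n" and j: "j < ?n" using P0 U2 by auto
    have "(W * adj W) $$ (i,j) = (\<Sum>k = 0..<Suc m. (u0 # us) ! k $ i * cnj ((u0 # us) ! k $ j))"
      using i j W lenus by (simp add: W_def scalar_prod_def row_def col_def mat_of_cols_def)
    also have "\<dots> = u0 $ i * cnj (u0 $ j) + (\<Sum>k = 0..<m. us ! k $ i * cnj (us ! k $ j))"
      by (subst sum.atLeast0_lessThan_Suc_shift) simp
    also have "\<dots> = (P0 + U2 * adj U2) $$ (i,j)"
      using i j U2 lenus by (simp add: P0_def U2_def scalar_prod_def row_def col_def mat_of_cols_def)
    finally show "(W * adj W) $$ (i,j) = (P0 + U2 * adj U2) $$ (i,j)" .
  qed (use P0 U2 W in auto)
  have adjU2u0: "adj U2 *\<^sub>v u0 = 0\<^sub>v m"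
  proof (rule eq_vecI)
    fix j assume "j < dim_vec (0\<^sub>v m :: complex vec)"
    then have j: "j < m" by simp
    have "(adj U2 *\<^sub>v u0) $ j = u0 \<bullet>c us ! j"
      using j U2 u0 lenus usc'[OF j] by (simp add: U2_def scalar_prod_def row_def mat_of_cols_def mult.commute)
    also have "\<dots> = (u0 # us) ! 0 \<bullet>c (u0 # us) ! Suc j" by simp
    also have "\<dots> = 0" using on[of 0 "Suc j"] j by simp
    finally show "(adj U2 *\<^sub>v u0) $ j = 0\<^sub>v m $ j" using j by simp
  qed (use U2 in auto)
  define A3 where "A3 = adj U2 * A * U2"
  have A3: "A3 \<in> carrier_mat m m" unfolding A3_def using U2 A by auto
  have h3: "adj A3 = A3" unfolding A3_def
  proof -
    have c1: "adj U2 * A \<in> carrier_mat m ?n" using mult_carrier_mat[OF adj_carrier[OF U2] A] .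
    have "adj (adj U2 * A * U2) = adj U2 * adj (adj U2 * A)" using adj_mult[OF c1 U2] .
    also have "adj (adj U2 * A) = A * U2" using adj_mult[OF adj_carrier[OF U2] A] h by simp
    finally show "adj (adj U2 * A * U2) = adj U2 * A * U2" using U2 A by (simp add: assoc_mult_mat[of _ m ?n _ ?n _ m])
  qed
  from Suc.IH[OF A3 h3] obtain V d3 where V: "V \<in> carrier_mat m m" "adj V * V = 1\<^sub>m m"
    "\<forall>i<m. A3 *\<^sub>v col V i = complex_of_real (d3 i) \<cdot>\<^sub>v col V i" by auto
  have U2y_u0: "\<And>y. y \<in> carrier_vec m \<Longrightarrow> (U2 *\<^sub>v y) \<bullet>c u0 = 0"
    using cip_adj[OF U2 _ u0(1)] adjU2u0 by simp
  have key: "\<And>y. y \<in> carrier_vec m \<Longrightarrow> A *\<^sub>v (U2 *\<^sub>v y) = U2 *\<^sub>v (A3 *\<^sub>v y)"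
  proof -
    fix y :: "complex vec" assume y: "y \<in> carrier_vec m"
    define z where "z = A *\<^sub>v (U2 *\<^sub>v y)"
    have z: "z \<in> carrier_vec ?n" unfolding z_def using A U2 y by simp
    have zu0: "z \<bullet>c u0 = 0"
    proof -
      have "z \<bullet>c u0 = (U2 *\<^sub>v y) \<bullet>c (A *\<^sub>v u0)"
        unfolding z_def using cip_adj[OF A _ u0(1), of "U2 *\<^sub>v y"] h U2 y by simp
      also have "\<dots> = cnj e * ((U2 *\<^sub>v y) \<bullet>c u0)" unfolding Au0
        using cip_smult_r[of "U2 *\<^sub>v y" ?n u0] U2 y u0 by simp
      finally show ?thesis using U2y_u0[OF y] by simp
    qed
    have P0z: "P0 *\<^sub>v z = 0\<^sub>v ?n"
    proof (rule eq_vecI)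
      fix i assume "i < dim_vec (0\<^sub>v ?n :: complex vec)"
      then have i: "i < ?n" by simp
      have "(P0 *\<^sub>v z) $ i = u0 $ i * (z \<bullet>c u0)"
        using i z u0 by (simp add: P0_def scalar_prod_def row_def sum_distrib_left distrib_left mult_ac)
      then show "(P0 *\<^sub>v z) $ i = 0\<^sub>v ?n $ i" using zu0 i by simp
    qed (use P0 in auto)
    have "z = (W * adj W) *\<^sub>v z" using WW' z by simp
    also have "\<dots> = P0 *\<^sub>v z + (U2 * adj U2) *\<^sub>v z" unfolding decomp
      using P0 U2 z by (simp add: add_mult_distrib_mat_vec[of _ ?n ?n])
    also have "\<dots> = (U2 * adj U2) *\<^sub>v z" unfolding P0z using left_zero_vec[OF mult_mat_vec_carrier[OF mult_carrier_mat[OF U2 adj_carrier[OF U2]] z]] .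
    also have "\<dots> = U2 *\<^sub>v (A3 *\<^sub>v y)"
    proof -
      have c1: "adj U2 * A \<in> carrier_mat m ?n" using mult_carrier_mat[OF adj_carrier[OF U2] A] .
      have uy: "U2 *\<^sub>v y \<in> carrier_vec ?n" using U2 y by simp
      have "A3 *\<^sub>v y = (adj U2 * A) *\<^sub>v (U2 *\<^sub>v y)" unfolding A3_def by (rule assoc_mult_mat_vec[OF c1 U2 y])
      also have "\<dots> = adj U2 *\<^sub>v z" unfolding z_def by (rule assoc_mult_mat_vec[OF adj_carrier[OF U2] A uy])
      finally have "A3 *\<^sub>v y = adj U2 *\<^sub>v z" .
      then show ?thesis using assoc_mult_mat_vec[OF U2 adj_carrier[OF U2] z] by simp
    qed
    finally show "A *\<^sub>v (U2 *\<^sub>v y) = U2 *\<^sub>v (A3 *\<^sub>v y)" unfolding z_def .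
  qed
  define cs where "cs = u0 # map (\<lambda>i. U2 *\<^sub>v col V i) [0..<m]"
  define U where "U = mat_of_cols ?n cs"
  define d where "d = (\<lambda>i. if i = 0 then Re e else d3 (i - 1))"
  have lencs: "length cs = ?n" unfolding cs_def by simp
  have csc: "set cs \<subseteq> carrier_vec ?n" unfolding cs_def using u0 U2 V by auto
  have colV: "\<And>k. k < m \<Longrightarrow> col V k \<in> carrier_vec m" using V by auto
  have Von: "\<And>a b. a < m \<Longrightarrow> b < m \<Longrightarrow> col V a \<bullet>c col V b = (if a = b then 1 else 0)"
    using adj_mult_index[OF V(1)] V(2) by (metis index_one_mat(1))
  have U2on: "\<And>x y. x \<in> carrier_vec m \<Longrightarrow> y \<in> carrier_vec m \<Longrightarrow> (U2 *\<^sub>v x) \<bullet>c (U2 *\<^sub>v y) = x \<bullet>c y"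
  proof -
    fix x y :: "complex vec" assume x: "x \<in> carrier_vec m" and y: "y \<in> carrier_vec m"
    have "(U2 *\<^sub>v x) \<bullet>c (U2 *\<^sub>v y) = x \<bullet>c (adj U2 *\<^sub>v (U2 *\<^sub>v y))"
      using cip_adj[OF U2 x] U2 y by simp
    also have "adj U2 *\<^sub>v (U2 *\<^sub>v y) = y"
      using U2 y UU by (simp add: assoc_mult_mat_vec[symmetric, of _ m ?n _ m])
    finally show "(U2 *\<^sub>v x) \<bullet>c (U2 *\<^sub>v y) = x \<bullet>c y" .
  qed
  have cson: "\<And>i j. i < length cs \<Longrightarrow> j < length cs \<Longrightarrow> cs ! i \<bullet>c cs ! j = (if i = j then 1 else 0)"
  proof -
    fix i j assume i: "i < length cs" and j: "j < length cs"
    show "cs ! i \<bullet>c cs ! j = (if i = j then 1 else 0)"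
    proof (cases i)
      case 0 note i0 = this
      show ?thesis
      proof (cases j)
        case 0 then show ?thesis using i0 u0 by (simp add: cs_def)
      next
        case (Suc k)
        then have k: "k < m" using j lencs by simp
        have "cs ! i \<bullet>c cs ! j = cnj ((U2 *\<^sub>v col V k) \<bullet>c u0)"
          using i0 Suc k cip_sym[of u0 ?n "U2 *\<^sub>v col V k"] u0 U2 colV[OF k] by (simp add: cs_def)
        then show ?thesis using U2y_u0[OF colV[OF k]] i0 Suc by simp
      qed
    next
      case (Suc k) note ik = this
      then have k: "k < m" using i lencs by simp
      show ?thesis
      proof (cases j)
        case 0
        have "cs ! i \<bullet>c cs ! j = (U2 *\<^sub>v col V k) \<bullet>c u0"
          using 0 ik k by (simp add: cs_def)
        then show ?thesis using U2y_u0[OF colV[OF k]] ik 0 by simp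
      next
        case (Suc l)
        then have l: "l < m" using j lencs by simp
        have "cs ! i \<bullet>c cs ! j = col V k \<bullet>c col V l"
          using Suc ik k l U2on[OF colV[OF k] colV[OF l]] by (simp add: cs_def)
        then show ?thesis using Von[OF k l] Suc ik by simp
      qed
    qed
  qed
  show ?case
  proof (intro exI[of _ U] exI[of _ d] conjI allI impI)
    show Uc: "U \<in> carrier_mat ?n ?n" unfolding U_def using mat_of_cols_carrier(1)[of ?n cs] lencs by simp
    show "adj U * U = 1\<^sub>m ?n" unfolding U_def using orthonormal_mat[OF csc cson] lencs by simp
    fix i assume i: "i < ?n"
    have colU: "col U i = cs ! i" unfolding U_def using i lencs csc by (simp add: col_mat_of_cols subsetD)
    show "A *\<^sub>v col U i = complex_of_real (d i) \<cdot>\<^sub>v col U i"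
    proof (cases i)
      case 0
      then show ?thesis unfolding colU using Au0 eRe by (simp add: cs_def d_def)
    next
      case (Suc k)
      then have k: "k < m" using i by simp
      have "A *\<^sub>v col U i = U2 *\<^sub>v (A3 *\<^sub>v col V k)" unfolding colU
        using Suc k key[OF colV[OF k]] by (simp add: cs_def)
      also have "\<dots> = complex_of_real (d3 k) \<cdot>\<^sub>v (U2 *\<^sub>v col V k)"
        using V(3) k U2 colV[OF k] by (simp add: mult_mat_vec)
      finally show ?thesis unfolding colU using Suc k by (simp add: cs_def d_def)
    qed
  qed
qed



definition unitary_n :: "nat \<Rightarrow> complex mat \<Rightarrow> bool" where
  "unitary_n n U \<longleftrightarrow> U \<in> carrier_mat n n \<and> adj U * U = 1\<^sub>m n \<and> U * adj U = 1\<^sub>m n"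

lemma spectral':
  assumes A: "A \<in> carrier_mat n n" and h: "adj A = A"
  shows "\<exists>U d. unitary_n n U \<and> (\<forall>i<n. A *\<^sub>v col U i = complex_of_real (d i) \<cdot>\<^sub>v col U i)"
proof -
  from spectral[OF A h] obtain U d where U: "U \<in> carrier_mat n n" "adj U * U = 1\<^sub>m n"
    "\<forall>i<n. A *\<^sub>v col U i = complex_of_real (d i) \<cdot>\<^sub>v col U i" by blast
  have "U * adj U = 1\<^sub>m n" using mat_mult_left_right_inverse[OF adj_carrier[OF U(1)] U(1) U(2)] .
  then show ?thesis using U unfolding unitary_n_def by blast
qed

lemma unitary_col_carrier: "unitary_n n U \<Longrightarrow> i < n \<Longrightarrow> col U i \<in> carrier_vec n"
  unfolding unitary_n_def by auto

lemma unitary_col_ip: assumes "unitary_n n U" "i < n" "j < n"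
  shows "col U i \<bullet>c col U j = (if i = j then 1 else 0)"
  using adj_mult_index[of U n n j i] assms unfolding unitary_n_def by auto

lemma unitary_col_nz: assumes "unitary_n n U" "i < n" shows "col U i \<noteq> 0\<^sub>v n"
  using unitary_col_ip[OF assms assms(2)] by auto

lemma mat_unit_vec: fixes U :: "complex mat" assumes U: "U \<in> carrier_mat n m" and i: "i < m" shows "U *\<^sub>v unit_vec m i = col U i"
proof -
  have "U *\<^sub>v unit_vec m i = U *\<^sub>v col (1\<^sub>m m) i" using i by simp
  also have "\<dots> = col (U * 1\<^sub>m m) i" using col_mult2[OF U one_carrier_mat i] by simp
  also have "\<dots> = col U i" using U by simp
  finally show ?thesis .
qed

lemma unitary_adj_col: assumes "unitary_n n U" "i < n" shows "adj U *\<^sub>v col U i = unit_vec n i"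
proof -
  have U: "U \<in> carrier_mat n n" using assms unfolding unitary_n_def by auto
  have "adj U *\<^sub>v col U i = col (adj U * U) i" using col_mult2[OF adj_carrier[OF U] U assms(2)] by simp
  then show ?thesis using assms unfolding unitary_n_def by simp
qed

lemma eq_by_unitary: assumes U: "unitary_n n U" and X: "X \<in> carrier_mat n n" and Y: "Y \<in> carrier_mat n n"
  and e: "\<And>i. i < n \<Longrightarrow> X *\<^sub>v col U i = Y *\<^sub>v col U i"
  shows "X = Y"
proof -
  have Uc: "U \<in> carrier_mat n n" and UU: "U * adj U = 1\<^sub>m n" using U unfolding unitary_n_def by auto
  have XU: "X * U = Y * U"
  proof (rule eq_matI)
    fix i j assume i: "i < dim_row (Y * U)" and j: "j < dim_col (Y * U)"
    then have i: "i < n" and j: "j < n" using Y Uc by auto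
    have "(X * U) $$ (i,j) = col (X * U) j $ i" using X Uc i j by simp
    also have "\<dots> = (X *\<^sub>v col U j) $ i" using col_mult2[OF X Uc j] by simp
    also have "\<dots> = (Y *\<^sub>v col U j) $ i" using e[OF j] by simp
    also have "\<dots> = col (Y * U) j $ i" using col_mult2[OF Y Uc j] by simp
    also have "\<dots> = (Y * U) $$ (i,j)" using Y Uc i j by simp
    finally show "(X * U) $$ (i,j) = (Y * U) $$ (i,j)" .
  qed (use X Y Uc in auto)
  have "X = X * (U * adj U)" using UU X by simp
  also have "\<dots> = (X * U) * adj U" using X Uc by (simp add: assoc_mult_mat[of _ n n _ n _ n])
  also have "\<dots> = (Y * U) * adj U" using XU by simp
  also have "\<dots> = Y * (U * adj U)" using Y Uc by (simp add: assoc_mult_mat[of _ n n _ n _ n])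
  also have "\<dots> = Y" using UU Y by simp
  finally show ?thesis .
qed

lemma psd_eig: assumes A: "psd_mat n A" and v: "v \<in> carrier_vec n" "v \<noteq> 0\<^sub>v n"
  and e: "A *\<^sub>v v = l \<cdot>\<^sub>v v"
  shows "l = complex_of_real (Re l)" "Re l \<ge> 0"
proof -
  have Ac: "A \<in> carrier_mat n n" and h: "adj A = A" using A unfolding psd_mat_def by auto
  have "cnj l = l" using herm_eig_real[OF Ac h v e] .
  then show lr: "l = complex_of_real (Re l)" by (simp add: complex_eq_iff)
  have p: "Re (v \<bullet>c v) > 0" using cip_self_pos[OF v] .
  have "(A *\<^sub>v v) \<bullet>c v = l * (v \<bullet>c v)" using e v by (simp add: cip_smult_l[of _ n])
  also have "\<dots> = complex_of_real (Re l * Re (v \<bullet>c v))"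
    using lr cip_self(1)[OF v(1)] by (metis of_real_mult)
  finally have "Re ((A *\<^sub>v v) \<bullet>c v) = Re l * Re (v \<bullet>c v)" by simp
  moreover have "Re ((A *\<^sub>v v) \<bullet>c v) \<ge> 0" using A v unfolding psd_mat_def by auto
  ultimately show "Re l \<ge> 0" using p by (simp add: zero_le_mult_iff)
qed

lemma eig_sqrt: assumes C: "psd_mat n C" and u: "u \<in> carrier_vec n" and nu: "nu \<ge> 0"
  and e: "C *\<^sub>v (C *\<^sub>v u) = complex_of_real nu \<cdot>\<^sub>v u"
  shows "C *\<^sub>v u = complex_of_real (sqrt nu) \<cdot>\<^sub>v u"
proof -
  have Cc: "C \<in> carrier_mat n n" and h: "adj C = C" using C unfolding psd_mat_def by auto
  have pos: "\<And>w. w \<in> carrier_vec n \<Longrightarrow> Re ((C *\<^sub>v w) \<bullet>c w) \<ge> 0" using C unfolding psd_mat_def by auto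
  define s where "s = complex_of_real (sqrt nu)"
  define a where "a = C *\<^sub>v u"
  have a: "a \<in> carrier_vec n" unfolding a_def using Cc u by simp
  have Ca: "C *\<^sub>v a = complex_of_real nu \<cdot>\<^sub>v u" using e unfolding a_def .
  have ss0: "sqrt nu * sqrt nu = nu" using nu by simp
  have "s * s = complex_of_real (sqrt nu * sqrt nu)" unfolding s_def by (simp only: of_real_mult)
  then have ss: "s * s = complex_of_real nu" using ss0 by simp
  define w where "w = a - s \<cdot>\<^sub>v u"
  have su: "s \<cdot>\<^sub>v u \<in> carrier_vec n" using u by simp
  have w: "w \<in> carrier_vec n" unfolding w_def using a u by simp
  have wi: "\<And>i. i < n \<Longrightarrow> w $ i = a $ i - s * u $ i" unfolding w_def using a u by simp
  have Cw: "C *\<^sub>v w = C *\<^sub>v a - C *\<^sub>v (s \<cdot>\<^sub>v u)"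
    unfolding w_def by (rule mult_minus_distrib_mat_vec[OF Cc a su])
  also have "C *\<^sub>v (s \<cdot>\<^sub>v u) = s \<cdot>\<^sub>v a" unfolding a_def by (rule mult_mat_vec[OF Cc u])
  finally have Cw: "C *\<^sub>v w = complex_of_real nu \<cdot>\<^sub>v u - s \<cdot>\<^sub>v a" unfolding Ca .
  have Cwi: "\<And>i. i < n \<Longrightarrow> (C *\<^sub>v w) $ i = complex_of_real nu * u $ i - s * a $ i"
    unfolding Cw using a u by simp
  have Cwc: "C *\<^sub>v w \<in> carrier_vec n" using Cc w by simp
  have sum0: "C *\<^sub>v w + s \<cdot>\<^sub>v w = 0\<^sub>v n"
  proof (rule eq_vecI)
    fix i assume "i < dim_vec (0\<^sub>v n :: complex vec)"
    then have i: "i < n" by simp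
    have "(C *\<^sub>v w + s \<cdot>\<^sub>v w) $ i = (C *\<^sub>v w) $ i + s * w $ i"
      using i Cwc w by simp
    also have "\<dots> = complex_of_real nu * u $ i - s * a $ i + s * (a $ i - s * u $ i)"
      using Cwi[OF i] wi[OF i] by simp
    also have "\<dots> = (complex_of_real nu - s * s) * u $ i" by (simp add: algebra_simps)
    also have "\<dots> = 0" using ss by simp
    finally show "(C *\<^sub>v w + s \<cdot>\<^sub>v w) $ i = 0\<^sub>v n $ i" using i by simp
  qed (use Cwc w in simp)
  have sw: "s \<cdot>\<^sub>v w \<in> carrier_vec n" using w by simp
  have "(C *\<^sub>v w + s \<cdot>\<^sub>v w) \<bullet>c w = (C *\<^sub>v w) \<bullet>c w + (s \<cdot>\<^sub>v w) \<bullet>c w"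
    by (rule add_scalar_prod_distrib[OF Cwc sw carrier_vec_conjugate[OF w]])
  also have "(s \<cdot>\<^sub>v w) \<bullet>c w = s * (w \<bullet>c w)" by (rule cip_smult_l[OF w w])
  also have "(C *\<^sub>v w + s \<cdot>\<^sub>v w) \<bullet>c w = 0" unfolding sum0 using w by (simp add: scalar_prod_def)
  finally have eq0: "(C *\<^sub>v w) \<bullet>c w + s * (w \<bullet>c w) = 0" by simp
  have "Re ((C *\<^sub>v w) \<bullet>c w + s * (w \<bullet>c w)) = Re ((C *\<^sub>v w) \<bullet>c w) + sqrt nu * Re (w \<bullet>c w)"
    unfolding s_def by simp
  then have eq: "Re ((C *\<^sub>v w) \<bullet>c w) + sqrt nu * Re (w \<bullet>c w) = 0" using eq0 by simp
  show ?thesis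
  proof (cases "nu = 0")
    case False
    then have sp: "sqrt nu > 0" using nu by simp
    have r1: "Re (w \<bullet>c w) \<ge> 0" using cip_self(2)[OF w] .
    have r2: "Re ((C *\<^sub>v w) \<bullet>c w) \<ge> 0" using pos[OF w] .
    have r3: "sqrt nu * Re (w \<bullet>c w) \<ge> 0" using r1 sp by simp
    have "sqrt nu * Re (w \<bullet>c w) = 0" using eq r2 r3 by linarith
    then have "Re (w \<bullet>c w) = 0" using sp by simp
    then have w0: "w = 0\<^sub>v n" using cip_self_pos[OF w] by fastforce
    show ?thesis
    proof (rule eq_vecI)
      fix i assume "i < dim_vec (complex_of_real (sqrt nu) \<cdot>\<^sub>v u)"
      then have i: "i < n" using u by simp
      have "a $ i - s * u $ i = 0" using wi[OF i] w0 i by simp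
      then show "(C *\<^sub>v u) $ i = (complex_of_real (sqrt nu) \<cdot>\<^sub>v u) $ i"
        using i u unfolding a_def[symmetric] s_def[symmetric] by simp
    qed (use Cc u in simp)
  next
    case True
    have z: "(0::complex) \<cdot>\<^sub>v u = 0\<^sub>v n" using u by (intro eq_vecI) auto
    have Ca0: "C *\<^sub>v a = 0\<^sub>v n" using Ca True z by simp
    have "a \<bullet>c a = u \<bullet>c (adj C *\<^sub>v a)" unfolding a_def by (rule cip_adj[OF Cc u a[unfolded a_def]])
    then have "a \<bullet>c a = 0" using Ca0 h u by (simp add: scalar_prod_def)
    then have "a = 0\<^sub>v n" using a by simp
    then show ?thesis using True z unfolding a_def by simp
  qed
qed

definition dmat :: "nat \<Rightarrow> (nat \<Rightarrow> real) \<Rightarrow> complex mat" where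
  "dmat n s = mat n n (\<lambda>(i,j). if i = j then complex_of_real (s i) else 0)"

lemma dmat_carrier[simp]: "dmat n s \<in> carrier_mat n n" by (simp add: dmat_def)

lemma dmat_adj[simp]: "adj (dmat n s) = dmat n s"
  by (rule eq_matI) (auto simp: dmat_def)

lemma dmat_vec: assumes "y \<in> carrier_vec n"
  shows "dmat n s *\<^sub>v y = vec n (\<lambda>i. complex_of_real (s i) * y $ i)"
proof (rule eq_vecI)
  fix i assume "i < dim_vec (vec n (\<lambda>i. complex_of_real (s i) * y $ i))"
  then have i: "i < n" by simp
  have "(dmat n s *\<^sub>v y) $ i = (\<Sum>j = 0..<n. (if i = j then complex_of_real (s i) else 0) * y $ j)"
    using i assms by (simp add: dmat_def scalar_prod_def row_def)
  also have "\<dots> = complex_of_real (s i) * y $ i"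
    using i by (simp add: if_distrib[of "\<lambda>x. x * _"] cong: if_cong)
  finally show "(dmat n s *\<^sub>v y) $ i = vec n (\<lambda>i. complex_of_real (s i) * y $ i) $ i" using i by simp
qed (use assms in \<open>auto simp: dmat_def\<close>)

lemma dmat_unit: "i < n \<Longrightarrow> dmat n s *\<^sub>v unit_vec n i = complex_of_real (s i) \<cdot>\<^sub>v unit_vec n i"
  by (subst dmat_vec) (auto simp: unit_vec_def)

lemma mult_cnj_cmod: "z * cnj z = complex_of_real ((cmod z)\<^sup>2)"
  using complex_norm_square[of z] by simp

lemma dmat_quad: assumes "y \<in> carrier_vec n"
  shows "Re ((dmat n s *\<^sub>v y) \<bullet>c y) = (\<Sum>i = 0..<n. s i * (cmod (y $ i))\<^sup>2)"
proof -
  have "(dmat n s *\<^sub>v y) \<bullet>c y = (\<Sum>i = 0..<n. complex_of_real (s i) * (y $ i * cnj (y $ i)))"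
    using assms by (simp add: dmat_vec scalar_prod_def mult_ac)
  also have "\<dots> = complex_of_real (\<Sum>i = 0..<n. s i * (cmod (y $ i))\<^sup>2)"
    by (simp add: mult_cnj_cmod)
  finally show ?thesis by simp
qed

lemma cip_quad: assumes "y \<in> carrier_vec n"
  shows "Re (y \<bullet>c y) = (\<Sum>i = 0..<n. (cmod (y $ i))\<^sup>2)"
proof -
  have "y \<bullet>c y = (\<Sum>i = 0..<n. y $ i * cnj (y $ i))" using assms by (simp add: scalar_prod_def)
  also have "\<dots> = complex_of_real (\<Sum>i = 0..<n. (cmod (y $ i))\<^sup>2)"
    by (simp add: mult_cnj_cmod del: of_real_power)
  finally show ?thesis by simp
qed

lemma diag_form: assumes U: "unitary_n n U" and A: "A \<in> carrier_mat n n"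
  and e: "\<And>i. i < n \<Longrightarrow> A *\<^sub>v col U i = complex_of_real (d i) \<cdot>\<^sub>v col U i"
  shows "A = U * dmat n d * adj U"
proof -
  have Uc: "U \<in> carrier_mat n n" using U unfolding unitary_n_def by auto
  show ?thesis
  proof (rule eq_by_unitary[OF U A])
    show "U * dmat n d * adj U \<in> carrier_mat n n" using mult_carrier_mat[OF mult_carrier_mat[OF Uc dmat_carrier] adj_carrier[OF Uc]] .
    fix i assume i: "i < n"
    have ci: "col U i \<in> carrier_vec n" using unitary_col_carrier[OF U i] .
    have "(U * dmat n d * adj U) *\<^sub>v col U i = (U * dmat n d) *\<^sub>v (adj U *\<^sub>v col U i)"
      by (rule assoc_mult_mat_vec[OF mult_carrier_mat[OF Uc dmat_carrier] adj_carrier[OF Uc] ci])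
    also have "\<dots> = U *\<^sub>v (dmat n d *\<^sub>v (adj U *\<^sub>v col U i))"
      by (rule assoc_mult_mat_vec[OF Uc dmat_carrier mult_mat_vec_carrier[OF adj_carrier[OF Uc] ci]])
    also have "\<dots> = complex_of_real (d i) \<cdot>\<^sub>v col U i"
      using unitary_adj_col[OF U i] dmat_unit[OF i] i Uc by (simp add: mult_mat_vec mat_unit_vec)
    finally show "A *\<^sub>v col U i = (U * dmat n d * adj U) *\<^sub>v col U i" using e[OF i] by simp
  qed
qed



lemma psdD: assumes "psd_mat n A"
  shows "A \<in> carrier_mat n n" "adj A = A" "\<And>v. v \<in> carrier_vec n \<Longrightarrow> Re ((A *\<^sub>v v) \<bullet>c v) \<ge> 0"
  using assms unfolding psd_mat_def by auto

lemma psdI: assumes "A \<in> carrier_mat n n" "adj A = A" "\<And>v. v \<in> carrier_vec n \<Longrightarrow> Re ((A *\<^sub>v v) \<bullet>c v) \<ge> 0"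
  shows "psd_mat n A"
  using assms unfolding psd_mat_def by auto

lemma psd_spec: assumes A: "psd_mat n A"
  shows "\<exists>U d. unitary_n n U \<and> (\<forall>i<n. A *\<^sub>v col U i = complex_of_real (d i) \<cdot>\<^sub>v col U i) \<and> (\<forall>i<n. d i \<ge> 0)"
proof -
  from spectral'[OF psdD(1,2)[OF A]] obtain U d where U: "unitary_n n U"
    and e: "\<forall>i<n. A *\<^sub>v col U i = complex_of_real (d i) \<cdot>\<^sub>v col U i" by blast
  have "\<forall>i<n. d i \<ge> 0"
  proof (intro allI impI)
    fix i assume i: "i < n"
    have "Re (complex_of_real (d i)) \<ge> 0"
      by (rule psd_eig(2)[OF A unitary_col_carrier[OF U i] unitary_col_nz[OF U i]]) (use e i in simp)
    then show "d i \<ge> 0" by simp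
  qed
  then show ?thesis using U e by blast
qed

lemma udiag_carrier: "U \<in> carrier_mat n n \<Longrightarrow> U * dmat n s * adj U \<in> carrier_mat n n"
  using mult_carrier_mat[OF mult_carrier_mat[OF _ dmat_carrier] adj_carrier] by blast

lemma udiag_vec: assumes Uc: "U \<in> carrier_mat n n" and v: "v \<in> carrier_vec n"
  shows "(U * dmat n s * adj U) *\<^sub>v v = U *\<^sub>v (dmat n s *\<^sub>v (adj U *\<^sub>v v))"
proof -
  have "(U * dmat n s * adj U) *\<^sub>v v = (U * dmat n s) *\<^sub>v (adj U *\<^sub>v v)"
    by (rule assoc_mult_mat_vec[OF mult_carrier_mat[OF Uc dmat_carrier] adj_carrier[OF Uc] v])
  also have "\<dots> = U *\<^sub>v (dmat n s *\<^sub>v (adj U *\<^sub>v v))"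
    by (rule assoc_mult_mat_vec[OF Uc dmat_carrier mult_mat_vec_carrier[OF adj_carrier[OF Uc] v]])
  finally show ?thesis .
qed

lemma udiag_col: assumes U: "unitary_n n U" and i: "i < n"
  shows "(U * dmat n s * adj U) *\<^sub>v col U i = complex_of_real (s i) \<cdot>\<^sub>v col U i"
proof -
  have Uc: "U \<in> carrier_mat n n" using U unfolding unitary_n_def by auto
  have "(U * dmat n s * adj U) *\<^sub>v col U i = U *\<^sub>v (dmat n s *\<^sub>v (adj U *\<^sub>v col U i))"
    by (rule udiag_vec[OF Uc unitary_col_carrier[OF U i]])
  also have "\<dots> = complex_of_real (s i) \<cdot>\<^sub>v col U i"
    using unitary_adj_col[OF U i] dmat_unit[OF i] i Uc by (simp add: mult_mat_vec mat_unit_vec)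
  finally show ?thesis .
qed

lemma udiag_adj: assumes Uc: "U \<in> carrier_mat n n"
  shows "adj (U * dmat n s * adj U) = U * dmat n s * adj U"
proof -
  have "adj (U * dmat n s * adj U) = adj (adj U) * adj (U * dmat n s)"
    by (rule adj_mult[OF mult_carrier_mat[OF Uc dmat_carrier] adj_carrier[OF Uc]])
  also have "adj (U * dmat n s) = adj (dmat n s) * adj U" by (rule adj_mult[OF Uc dmat_carrier])
  finally show ?thesis using Uc by (simp add: assoc_mult_mat[of _ n n _ n _ n])
qed

lemma udiag_quad: assumes Uc: "U \<in> carrier_mat n n" and v: "v \<in> carrier_vec n"
  shows "((U * dmat n s * adj U) *\<^sub>v v) \<bullet>c v = (dmat n s *\<^sub>v (adj U *\<^sub>v v)) \<bullet>c (adj U *\<^sub>v v)"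
  unfolding udiag_vec[OF Uc v]
  by (rule cip_adj[OF Uc mult_mat_vec_carrier[OF dmat_carrier mult_mat_vec_carrier[OF adj_carrier[OF Uc] v]] v])

lemma sqrt_exists: assumes A: "psd_mat n A" shows "\<exists>B. psd_mat n B \<and> B * B = A"
proof -
  from psd_spec[OF A] obtain U d where U: "unitary_n n U"
    and e: "\<forall>i<n. A *\<^sub>v col U i = complex_of_real (d i) \<cdot>\<^sub>v col U i" and d: "\<forall>i<n. d i \<ge> 0" by blast
  have Uc: "U \<in> carrier_mat n n" using U unfolding unitary_n_def by auto
  define s where "s = (\<lambda>i. sqrt (d i))"
  define B where "B = U * dmat n s * adj U"
  have Bc: "B \<in> carrier_mat n n" unfolding B_def by (rule udiag_carrier[OF Uc])
  have psdB: "psd_mat n B"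
  proof (rule psdI[OF Bc])
    show "adj B = B" unfolding B_def by (rule udiag_adj[OF Uc])
    fix v :: "complex vec" assume v: "v \<in> carrier_vec n"
    have y: "adj U *\<^sub>v v \<in> carrier_vec n" using mult_mat_vec_carrier[OF adj_carrier[OF Uc] v] .
    have "Re ((B *\<^sub>v v) \<bullet>c v) = (\<Sum>i = 0..<n. s i * (cmod ((adj U *\<^sub>v v) $ i))\<^sup>2)"
      unfolding B_def udiag_quad[OF Uc v] by (rule dmat_quad[OF y])
    also have "\<dots> \<ge> 0" by (rule sum_nonneg) (use d in \<open>simp add: s_def\<close>)
    finally show "Re ((B *\<^sub>v v) \<bullet>c v) \<ge> 0" .
  qed
  have "B * B = A"
  proof (rule eq_by_unitary[OF U mult_carrier_mat[OF Bc Bc] psdD(1)[OF A]])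
    fix i assume i: "i < n"
    have ci: "col U i \<in> carrier_vec n" using unitary_col_carrier[OF U i] .
    have Bi: "B *\<^sub>v col U i = complex_of_real (s i) \<cdot>\<^sub>v col U i" unfolding B_def by (rule udiag_col[OF U i])
    have "(B * B) *\<^sub>v col U i = B *\<^sub>v (B *\<^sub>v col U i)" by (rule assoc_mult_mat_vec[OF Bc Bc ci])
    also have "\<dots> = complex_of_real (s i) \<cdot>\<^sub>v (B *\<^sub>v col U i)"
      using mult_mat_vec[OF Bc ci, of "complex_of_real (s i)"] Bi by simp
    also have "\<dots> = (complex_of_real (s i) * complex_of_real (s i)) \<cdot>\<^sub>v col U i"
      unfolding Bi by (simp add: smult_smult_assoc)
    also have "complex_of_real (s i) * complex_of_real (s i) = complex_of_real (d i)"
      unfolding s_def using d i by (simp flip: of_real_mult)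
    finally show "(B * B) *\<^sub>v col U i = A *\<^sub>v col U i" using e i by simp
  qed
  then show ?thesis using psdB by blast
qed

lemma sqrt_unique: assumes A: "psd_mat n A" and B: "psd_mat n B" "B * B = A"
  and C: "psd_mat n C" "C * C = A"
  shows "B = C"
proof -
  from psd_spec[OF A] obtain U d where U: "unitary_n n U"
    and e: "\<forall>i<n. A *\<^sub>v col U i = complex_of_real (d i) \<cdot>\<^sub>v col U i" and d: "\<forall>i<n. d i \<ge> 0" by blast
  have gen: "\<And>X i. psd_mat n X \<Longrightarrow> X * X = A \<Longrightarrow> i < n \<Longrightarrow> X *\<^sub>v col U i = complex_of_real (sqrt (d i)) \<cdot>\<^sub>v col U i"
  proof -
    fix X i assume X: "psd_mat n X" "X * X = A" and i: "i < n"
    have ci: "col U i \<in> carrier_vec n" using unitary_col_carrier[OF U i] .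
    have Xc: "X \<in> carrier_mat n n" using psdD(1)[OF X(1)] .
    have "X *\<^sub>v (X *\<^sub>v col U i) = (X * X) *\<^sub>v col U i" by (rule assoc_mult_mat_vec[symmetric, OF Xc Xc ci])
    also have "\<dots> = complex_of_real (d i) \<cdot>\<^sub>v col U i" using X(2) e i by simp
    finally have ee: "X *\<^sub>v (X *\<^sub>v col U i) = complex_of_real (d i) \<cdot>\<^sub>v col U i" .
    show "X *\<^sub>v col U i = complex_of_real (sqrt (d i)) \<cdot>\<^sub>v col U i"
      by (rule eig_sqrt[OF X(1) ci _ ee]) (use d i in simp)
  qed
  show ?thesis
    by (rule eq_by_unitary[OF U psdD(1)[OF B(1)] psdD(1)[OF C(1)]]) (simp add: gen[OF B] gen[OF C])
qed

lemma mat_sqrt: assumes A: "psd_mat n A"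
  shows "psd_mat n (mat_sqrt n A)" "mat_sqrt n A * mat_sqrt n A = A"
proof -
  have "\<exists>!B. psd_mat n B \<and> B * B = A"
    using sqrt_exists[OF A] sqrt_unique[OF A] by blast
  from theI'[OF this] show "psd_mat n (mat_sqrt n A)" "mat_sqrt n A * mat_sqrt n A = A"
    unfolding mat_sqrt_def by auto
qed

lemma sqrt_comm: assumes A: "psd_mat n A" and X: "X \<in> carrier_mat n n" and XA: "X * A = A * X"
  shows "X * mat_sqrt n A = mat_sqrt n A * X"
proof -
  define B where "B = mat_sqrt n A"
  have B: "psd_mat n B" "B * B = A" unfolding B_def using mat_sqrt[OF A] by auto
  have Bc: "B \<in> carrier_mat n n" using psdD(1)[OF B(1)] .
  have Ac: "A \<in> carrier_mat n n" using psdD(1)[OF A] .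
  from psd_spec[OF A] obtain U d where U: "unitary_n n U"
    and e: "\<forall>i<n. A *\<^sub>v col U i = complex_of_real (d i) \<cdot>\<^sub>v col U i" and d: "\<forall>i<n. d i \<ge> 0" by blast
  have gen: "\<And>w i. w \<in> carrier_vec n \<Longrightarrow> A *\<^sub>v w = complex_of_real (d i) \<cdot>\<^sub>v w \<Longrightarrow> i < n \<Longrightarrow>
     B *\<^sub>v w = complex_of_real (sqrt (d i)) \<cdot>\<^sub>v w"
  proof -
    fix w i assume w: "w \<in> carrier_vec n" and ew: "A *\<^sub>v w = complex_of_real (d i) \<cdot>\<^sub>v w" and i: "i < n"
    have "B *\<^sub>v (B *\<^sub>v w) = (B * B) *\<^sub>v w" by (rule assoc_mult_mat_vec[symmetric, OF Bc Bc w])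
    also have "\<dots> = complex_of_real (d i) \<cdot>\<^sub>v w" using B(2) ew by simp
    finally have ee: "B *\<^sub>v (B *\<^sub>v w) = complex_of_real (d i) \<cdot>\<^sub>v w" .
    show "B *\<^sub>v w = complex_of_real (sqrt (d i)) \<cdot>\<^sub>v w"
      by (rule eig_sqrt[OF B(1) w _ ee]) (use d i in simp)
  qed
  have "X * B = B * X"
  proof (rule eq_by_unitary[OF U mult_carrier_mat[OF X Bc] mult_carrier_mat[OF Bc X]])
    fix i assume i: "i < n"
    have ci: "col U i \<in> carrier_vec n" using unitary_col_carrier[OF U i] .
    have w: "X *\<^sub>v col U i \<in> carrier_vec n" using X ci by simp
    have "A *\<^sub>v (X *\<^sub>v col U i) = (A * X) *\<^sub>v col U i" by (rule assoc_mult_mat_vec[symmetric, OF Ac X ci])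
    also have "\<dots> = X *\<^sub>v (A *\<^sub>v col U i)" unfolding XA[symmetric] by (rule assoc_mult_mat_vec[OF X Ac ci])
    also have "\<dots> = complex_of_real (d i) \<cdot>\<^sub>v (X *\<^sub>v col U i)" using e i mult_mat_vec[OF X ci] by simp
    finally have ew: "A *\<^sub>v (X *\<^sub>v col U i) = complex_of_real (d i) \<cdot>\<^sub>v (X *\<^sub>v col U i)" .
    have "(X * B) *\<^sub>v col U i = X *\<^sub>v (B *\<^sub>v col U i)" by (rule assoc_mult_mat_vec[OF X Bc ci])
    also have "\<dots> = complex_of_real (sqrt (d i)) \<cdot>\<^sub>v (X *\<^sub>v col U i)"
      using gen[OF ci _ i] e i mult_mat_vec[OF X ci] by simp
    also have "\<dots> = B *\<^sub>v (X *\<^sub>v col U i)" using gen[OF w ew i] by simp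
    also have "\<dots> = (B * X) *\<^sub>v col U i" by (rule assoc_mult_mat_vec[symmetric, OF Bc X ci])
    finally show "(X * B) *\<^sub>v col U i = (B * X) *\<^sub>v col U i" .
  qed
  then show ?thesis unfolding B_def .
qed

lemma psd_prod: assumes a: "psd_mat n a" and b: "psd_mat n b" and ab: "a * b = b * a"
  shows "psd_mat n (a * b)"
proof -
  have ac: "a \<in> carrier_mat n n" and bc: "b \<in> carrier_mat n n" using psdD(1) a b by auto
  define s where "s = mat_sqrt n a"
  have s: "psd_mat n s" "s * s = a" unfolding s_def using mat_sqrt[OF a] by auto
  have sc: "s \<in> carrier_mat n n" using psdD(1)[OF s(1)] .
  have bs: "b * s = s * b" unfolding s_def by (rule sqrt_comm[OF a bc ab[symmetric]])
  show ?thesis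
  proof (rule psdI)
    show "a * b \<in> carrier_mat n n" using ac bc by simp
    show "adj (a * b) = a * b" using adj_mult[OF ac bc] psdD(2)[OF a] psdD(2)[OF b] ab by simp
    fix v :: "complex vec" assume v: "v \<in> carrier_vec n"
    have sv: "s *\<^sub>v v \<in> carrier_vec n" using sc v by simp
    have "(a * b) *\<^sub>v v = s *\<^sub>v (b *\<^sub>v (s *\<^sub>v v))"
    proof -
      have "(a * b) *\<^sub>v v = a *\<^sub>v (b *\<^sub>v v)" by (rule assoc_mult_mat_vec[OF ac bc v])
      also have "\<dots> = s *\<^sub>v (s *\<^sub>v (b *\<^sub>v v))" unfolding s(2)[symmetric]
        by (rule assoc_mult_mat_vec[OF sc sc]) (use bc v in simp)
      also have "s *\<^sub>v (b *\<^sub>v v) = b *\<^sub>v (s *\<^sub>v v)"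
        using assoc_mult_mat_vec[OF sc bc v] assoc_mult_mat_vec[OF bc sc v] bs by simp
      finally show ?thesis .
    qed
    then have "((a * b) *\<^sub>v v) \<bullet>c v = (b *\<^sub>v (s *\<^sub>v v)) \<bullet>c (s *\<^sub>v v)"
      using cip_adj[OF sc _ v, of "b *\<^sub>v (s *\<^sub>v v)"] psdD(2)[OF s(1)] bc sv by simp
    then show "Re (((a * b) *\<^sub>v v) \<bullet>c v) \<ge> 0" using psdD(3)[OF b sv] by simp
  qed
qed

lemma rayleigh: assumes G: "psd_mat n G" and u: "u \<in> carrier_vec n" and n: "n > 0"
  shows "\<exists>nu. complex_of_real nu \<in> spectrum G \<and> nu \<ge> 0 \<and> Re ((G *\<^sub>v u) \<bullet>c u) \<le> nu * Re (u \<bullet>c u)"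
proof -
  from psd_spec[OF G] obtain U d where U: "unitary_n n U"
    and e: "\<forall>i<n. G *\<^sub>v col U i = complex_of_real (d i) \<cdot>\<^sub>v col U i" and d: "\<forall>i<n. d i \<ge> 0" by blast
  have Uc: "U \<in> carrier_mat n n" and UU: "U * adj U = 1\<^sub>m n" using U unfolding unitary_n_def by auto
  have Gc: "G \<in> carrier_mat n n" using psdD(1)[OF G] .
  have fin: "finite (d ` {0..<n})" "d ` {0..<n} \<noteq> {}" using n by auto
  obtain k where k0: "k < n" "d k = Max (d ` {0..<n})" using Max_in[OF fin] by force
  have k: "k < n" "\<And>i. i < n \<Longrightarrow> d i \<le> d k" using k0 Max_ge[OF fin(1)] by auto
  have Gd: "G = U * dmat n d * adj U" by (rule diag_form[OF U Gc]) (use e in simp)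
  define y where "y = adj U *\<^sub>v u"
  have y: "y \<in> carrier_vec n" unfolding y_def using mult_mat_vec_carrier[OF adj_carrier[OF Uc] u] .
  have "Re ((G *\<^sub>v u) \<bullet>c u) = (\<Sum>i = 0..<n. d i * (cmod (y $ i))\<^sup>2)"
    unfolding Gd udiag_quad[OF Uc u] y_def[symmetric] by (rule dmat_quad[OF y])
  also have "\<dots> \<le> (\<Sum>i = 0..<n. d k * (cmod (y $ i))\<^sup>2)"
    by (rule sum_mono) (use k in \<open>simp add: mult_right_mono\<close>)
  also have "\<dots> = d k * Re (y \<bullet>c y)" unfolding cip_quad[OF y] by (simp add: sum_distrib_left)
  also have "y \<bullet>c y = u \<bullet>c u"
  proof -
    have "y \<bullet>c y = u \<bullet>c (U *\<^sub>v y)" unfolding y_def using cip_adj[OF adj_carrier[OF Uc] u] y_def y by simp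
    also have "U *\<^sub>v y = u" unfolding y_def using assoc_mult_mat_vec[symmetric, OF Uc adj_carrier[OF Uc] u] UU u by simp
    finally show ?thesis .
  qed
  finally have ineq: "Re ((G *\<^sub>v u) \<bullet>c u) \<le> d k * Re (u \<bullet>c u)" .
  have "complex_of_real (d k) \<in> spectrum G"
    unfolding spectrum_def eigenvalue_def eigenvector_def
    using e k unitary_col_carrier[OF U k(1)] unitary_col_nz[OF U k(1)] Gc by auto
  then show ?thesis using ineq d k by blast
qed



lemma spec_iff: fixes A :: "complex mat" assumes "A \<in> carrier_mat n n"
  shows "mu \<in> spectrum A \<longleftrightarrow> (\<exists>v. v \<in> carrier_vec n \<and> v \<noteq> 0\<^sub>v n \<and> A *\<^sub>v v = mu \<cdot>\<^sub>v v)"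
  using assms unfolding spectrum_def eigenvalue_def eigenvector_def by auto

lemma smult_zero_vec: assumes "v \<in> carrier_vec n" "mu \<cdot>\<^sub>v v = 0\<^sub>v n" "(mu::complex) \<noteq> 0"
  shows "v = 0\<^sub>v n"
proof (rule eq_vecI)
  fix i assume "i < dim_vec (0\<^sub>v n :: complex vec)"
  then have i: "i < n" by simp
  have "(mu \<cdot>\<^sub>v v) $ i = 0" using assms(2) i by simp
  moreover have "(mu \<cdot>\<^sub>v v) $ i = mu * v $ i" using i assms(1) by simp
  ultimately show "v $ i = 0\<^sub>v n $ i" using i assms(3) by simp
qed (use assms in simp)

lemma cyc: fixes X Y :: "complex mat" assumes X: "X \<in> carrier_mat n n" and Y: "Y \<in> carrier_mat n n"
  and mu: "mu \<in> spectrum (X * Y)" "mu \<noteq> 0"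
  shows "mu \<in> spectrum (Y * X)"
proof -
  from mu(1) obtain v where v: "v \<in> carrier_vec n" "v \<noteq> 0\<^sub>v n" "(X * Y) *\<^sub>v v = mu \<cdot>\<^sub>v v"
    using spec_iff[OF mult_carrier_mat[OF X Y]] by blast
  define w where "w = Y *\<^sub>v v"
  have w: "w \<in> carrier_vec n" unfolding w_def using Y v by simp
  have XYv: "X *\<^sub>v w = mu \<cdot>\<^sub>v v" unfolding w_def using v(3) assoc_mult_mat_vec[OF X Y v(1)] by simp
  have w0: "w \<noteq> 0\<^sub>v n"
  proof
    assume "w = 0\<^sub>v n"
    moreover have "X *\<^sub>v 0\<^sub>v n = 0\<^sub>v n" using X by (intro eq_vecI) (auto simp: scalar_prod_def)
    ultimately have "mu \<cdot>\<^sub>v v = 0\<^sub>v n" using XYv by simp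
    then show False using smult_zero_vec[OF v(1) _ mu(2)] v(2) by simp
  qed
  have "(Y * X) *\<^sub>v w = Y *\<^sub>v (X *\<^sub>v w)" by (rule assoc_mult_mat_vec[OF Y X w])
  also have "\<dots> = Y *\<^sub>v (mu \<cdot>\<^sub>v v)" using XYv by simp
  also have "\<dots> = mu \<cdot>\<^sub>v w" unfolding w_def by (rule mult_mat_vec[OF Y v(1)])
  finally show ?thesis using spec_iff[OF mult_carrier_mat[OF Y X]] w w0 by blast
qed

lemma cyc_iff: fixes X Y :: "complex mat" assumes X: "X \<in> carrier_mat n n" and Y: "Y \<in> carrier_mat n n" and mu: "mu \<noteq> 0"
  shows "mu \<in> spectrum (X * Y) \<longleftrightarrow> mu \<in> spectrum (Y * X)"
  using cyc[OF X Y _ mu] cyc[OF Y X _ mu] by blast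

lemma sq_eig: fixes Q :: "complex mat" assumes Q: "Q \<in> carrier_mat n n" and mu: "mu \<in> spectrum (Q * Q)"
  shows "\<exists>l u. u \<in> carrier_vec n \<and> u \<noteq> 0\<^sub>v n \<and> Q *\<^sub>v u = l \<cdot>\<^sub>v u \<and> l * l = mu"
proof -
  from mu obtain v where v: "v \<in> carrier_vec n" "v \<noteq> 0\<^sub>v n" "(Q * Q) *\<^sub>v v = mu \<cdot>\<^sub>v v"
    using spec_iff[OF mult_carrier_mat[OF Q Q]] by blast
  define s where "s = csqrt mu"
  have ss: "s * s = mu" unfolding s_def using power2_csqrt[of mu] by (simp add: power2_eq_square)
  have QQv: "Q *\<^sub>v (Q *\<^sub>v v) = mu \<cdot>\<^sub>v v" using v(3) assoc_mult_mat_vec[OF Q Q v(1)] by simp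
  define a where "a = Q *\<^sub>v v"
  have a: "a \<in> carrier_vec n" unfolding a_def using Q v by simp
  define w where "w = a + s \<cdot>\<^sub>v v"
  have w: "w \<in> carrier_vec n" unfolding w_def using a v by simp
  show ?thesis
  proof (cases "w = 0\<^sub>v n")
    case True
    have "Q *\<^sub>v v = (- s) \<cdot>\<^sub>v v"
    proof (rule eq_vecI)
      fix i assume "i < dim_vec ((- s) \<cdot>\<^sub>v v)"
      then have i: "i < n" using v by simp
      have "w $ i = 0" using True i by simp
      then have "a $ i + s * v $ i = 0" unfolding w_def using i a v by simp
      then show "(Q *\<^sub>v v) $ i = ((- s) \<cdot>\<^sub>v v) $ i" using i v unfolding a_def[symmetric]
        by (simp add: eq_neg_iff_add_eq_0)
    qed (use Q v in simp)
    then show ?thesis using v ss by (intro exI[of _ "- s"] exI[of _ v]) auto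
  next
    case False
    have "Q *\<^sub>v w = s \<cdot>\<^sub>v w"
    proof -
      have "Q *\<^sub>v w = Q *\<^sub>v a + Q *\<^sub>v (s \<cdot>\<^sub>v v)" unfolding w_def
        by (rule mult_add_distrib_mat_vec[OF Q a]) (use v in simp)
      also have "Q *\<^sub>v (s \<cdot>\<^sub>v v) = s \<cdot>\<^sub>v a" unfolding a_def by (rule mult_mat_vec[OF Q v(1)])
      also have "Q *\<^sub>v a = mu \<cdot>\<^sub>v v" unfolding a_def by (rule QQv)
      also have "mu \<cdot>\<^sub>v v + s \<cdot>\<^sub>v a = s \<cdot>\<^sub>v w"
      proof (rule eq_vecI)
        fix i assume "i < dim_vec (s \<cdot>\<^sub>v w)"
        then have i: "i < n" using w by simp
        show "(mu \<cdot>\<^sub>v v + s \<cdot>\<^sub>v a) $ i = (s \<cdot>\<^sub>v w) $ i"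
          using i a v ss unfolding w_def by (simp add: algebra_simps)
      qed (use v a w in simp)
      finally show ?thesis .
    qed
    then show ?thesis using w False ss by (intro exI[of _ s] exI[of _ w]) auto
  qed
qed

lemma psd_gram: assumes Q: "Q \<in> carrier_mat n n"
  shows "psd_mat n (adj Q * Q)"
proof (rule psdI)
  show "adj Q * Q \<in> carrier_mat n n" using mult_carrier_mat[OF adj_carrier[OF Q] Q] .
  show "adj (adj Q * Q) = adj Q * Q" using adj_mult[OF adj_carrier[OF Q] Q] by simp
  fix v :: "complex vec" assume v: "v \<in> carrier_vec n"
  have "(adj Q * Q) *\<^sub>v v = adj Q *\<^sub>v (Q *\<^sub>v v)" by (rule assoc_mult_mat_vec[OF adj_carrier[OF Q] Q v])
  then have "((adj Q * Q) *\<^sub>v v) \<bullet>c v = (Q *\<^sub>v v) \<bullet>c (Q *\<^sub>v v)"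
    using cip_adj[OF adj_carrier[OF Q] _ v, of "Q *\<^sub>v v"] Q v by simp
  then show "Re (((adj Q * Q) *\<^sub>v v) \<bullet>c v) \<ge> 0" using cip_self(2)[of "Q *\<^sub>v v" n] Q v by simp
qed

lemma spec_empty: fixes A :: "complex mat" assumes "A \<in> carrier_mat 0 0" shows "spectrum A = {}"
proof -
  have z: "\<And>v::complex vec. v \<in> carrier_vec 0 \<Longrightarrow> v = 0\<^sub>v 0" by (intro eq_vecI) auto
  { fix mu assume "mu \<in> spectrum A"
    then obtain v :: "complex vec" where "v \<in> carrier_vec 0" "v \<noteq> 0\<^sub>v 0" using spec_iff[OF assms] by blast
    then have False using z by blast }
  then show ?thesis by blast
qed



lemma mcn: "A \<in> carrier_mat n n \<Longrightarrow> B \<in> carrier_mat n n \<Longrightarrow> A * B \<in> carrier_mat n n"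
  by (rule mult_carrier_mat)

theorem lemma2:
  fixes R1 R2 S1 S2 :: "complex mat" and n :: nat
  assumes "psd_mat n R1" "psd_mat n R2" "psd_mat n S1" "psd_mat n S2"
    and "R1 * R2 = R2 * R1" and "S1 * S2 = S2 * S1"
  defines "R \<equiv> mat_sqrt n R1 * mat_sqrt n R2"
    and "S \<equiv> mat_sqrt n S1 * mat_sqrt n S2"
  shows "lambda1 ((mat_sqrt n R * S * mat_sqrt n R) * (mat_sqrt n R * S * mat_sqrt n R))
     \<le> lambda1 ((mat_sqrt n R1 * S1 * mat_sqrt n R1) * (mat_sqrt n R2 * S2 * mat_sqrt n R2))"
proof -
  note P = assms(1-4)
  define a where "a = mat_sqrt n R1"
  define b where "b = mat_sqrt n R2"
  define c where "c = mat_sqrt n S1"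
  define d where "d = mat_sqrt n S2"
  have a: "psd_mat n a" "a * a = R1" using mat_sqrt[OF P(1)] unfolding a_def by auto
  have b: "psd_mat n b" "b * b = R2" using mat_sqrt[OF P(2)] unfolding b_def by auto
  have c: "psd_mat n c" "c * c = S1" using mat_sqrt[OF P(3)] unfolding c_def by auto
  have d: "psd_mat n d" "d * d = S2" using mat_sqrt[OF P(4)] unfolding d_def by auto
  have ac: "a \<in> carrier_mat n n" using psdD(1)[OF a(1)] .
  have bc: "b \<in> carrier_mat n n" using psdD(1)[OF b(1)] .
  have cc: "c \<in> carrier_mat n n" using psdD(1)[OF c(1)] .
  have dc: "d \<in> carrier_mat n n" using psdD(1)[OF d(1)] .
  have ab: "a * b = b * a"
  proof -
    have "R2 * a = a * R2" unfolding a_def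
      by (rule sqrt_comm[OF P(1) psdD(1)[OF P(2)]]) (use assms(5) in simp)
    then show ?thesis unfolding b_def by (intro sqrt_comm[OF P(2) ac]) simp
  qed
  have cd: "c * d = d * c"
  proof -
    have "S2 * c = c * S2" unfolding c_def
      by (rule sqrt_comm[OF P(3) psdD(1)[OF P(4)]]) (use assms(6) in simp)
    then show ?thesis unfolding d_def by (intro sqrt_comm[OF P(4) cc]) simp
  qed
  have Rab: "R = a * b" unfolding R_def a_def b_def ..
  have Scd: "S = c * d" unfolding S_def c_def d_def ..
  have Rpsd: "psd_mat n R" unfolding Rab by (rule psd_prod[OF a(1) b(1) ab])
  define r where "r = mat_sqrt n R"
  have r: "psd_mat n r" "r * r = a * b" using mat_sqrt[OF Rpsd] unfolding r_def Rab by auto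
  have rc: "r \<in> carrier_mat n n" using psdD(1)[OF r(1)] .
  note cs = ac bc cc dc rc
  note asc = assoc_mult_mat[of _ n n _ n _ n]
  have rr: "r * (r * X) = a * (b * X)" if X: "X \<in> carrier_mat n n" for X
  proof -
    have "r * (r * X) = (r * r) * X" by (rule assoc_mult_mat[OF rc rc X, symmetric])
    also have "\<dots> = a * (b * X)" unfolding r(2) by (rule assoc_mult_mat[OF ac bc X])
    finally show ?thesis .
  qed
  have ab': "a * (b * X) = b * (a * X)" if X: "X \<in> carrier_mat n n" for X
  proof -
    have "a * (b * X) = (a * b) * X" by (rule assoc_mult_mat[OF ac bc X, symmetric])
    also have "\<dots> = b * (a * X)" unfolding ab by (rule assoc_mult_mat[OF bc ac X])
    finally show ?thesis .
  qed
  define M where "M = (r * S * r) * (r * S * r)"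
  define N where "N = (a * S1 * a) * (b * S2 * b)"
  define Q where "Q = d * (a * (b * c))"
  have Qc: "Q \<in> carrier_mat n n" unfolding Q_def by (intro mcn cs)
  have adjQ: "adj Q = c * (b * (a * d))"
  proof -
    have "adj Q = adj (a * (b * c)) * d" unfolding Q_def using adj_mult[of d n n "a * (b * c)" n] cs psdD(2)[OF d(1)] by simp
    also have "adj (a * (b * c)) = adj (b * c) * a" using adj_mult[of a n n "b * c" n] cs psdD(2)[OF a(1)] by simp
    also have "adj (b * c) = c * b" using adj_mult[of b n n c n] cs psdD(2)[OF b(1)] psdD(2)[OF c(1)] by simp
    finally show ?thesis using cs by (simp add: asc)
  qed
  define G where "G = adj Q * Q"
  have Gpsd: "psd_mat n G" unfolding G_def by (rule psd_gram[OF Qc])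
  have Mc: "M \<in> carrier_mat n n" unfolding M_def Scd by (intro mcn cs)
  have Nc: "N \<in> carrier_mat n n" unfolding N_def c(2)[symmetric] d(2)[symmetric] by (intro mcn cs)
  have Gc: "G \<in> carrier_mat n n" using psdD(1)[OF Gpsd] .
  have K1: "\<And>mu. mu \<in> spectrum M \<Longrightarrow> mu \<noteq> 0 \<Longrightarrow> mu \<in> spectrum (Q * Q)"
  proof -
    fix mu assume mu: "mu \<in> spectrum M" "mu \<noteq> 0"
    define Y1 where "Y1 = c * (d * (a * (b * (c * (d * r)))))"
    define Y2 where "Y2 = d * (a * (b * (c * (d * (a * b)))))"
    have Y1c: "Y1 \<in> carrier_mat n n" unfolding Y1_def by (intro mcn cs)
    have Y2c: "Y2 \<in> carrier_mat n n" unfolding Y2_def by (intro mcn cs)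
    have e1: "M = r * Y1" unfolding M_def Y1_def Scd using cs by (simp add: asc rr)
    have e2: "Y1 * r = c * Y2" unfolding Y1_def Y2_def using cs by (simp add: asc r(2))
    have e3: "Y2 * c = Q * Q" unfolding Y2_def Q_def using cs by (simp add: asc)
    have "mu \<in> spectrum (Y1 * r)" using cyc[OF rc Y1c _ mu(2)] mu(1) e1 by simp
    then have "mu \<in> spectrum (Y2 * c)" using cyc[OF cc Y2c _ mu(2)] e2 by simp
    then show "mu \<in> spectrum (Q * Q)" using e3 by simp
  qed
  have K2: "\<And>nu. nu \<noteq> 0 \<Longrightarrow> nu \<in> spectrum G \<longleftrightarrow> nu \<in> spectrum N"
  proof -
    fix nu :: complex assume nu: "nu \<noteq> 0"
    define Y5 where "Y5 = a * (b * (c * (c * (b * (a * d)))))"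
    define Y6 where "Y6 = a * (c * (c * (a * (b * (d * d)))))"
    have Y5c: "Y5 \<in> carrier_mat n n" unfolding Y5_def by (intro mcn cs)
    have Y6c: "Y6 \<in> carrier_mat n n" unfolding Y6_def by (intro mcn cs)
    have e4: "Q * adj Q = d * Y5" unfolding adjQ unfolding Q_def Y5_def using cs by (simp add: asc)
    have e5: "Y5 * d = b * Y6"
    proof -
      have "Y5 * d = a * (b * (c * (c * (b * (a * (d * d))))))" unfolding Y5_def using cs by (simp add: asc)
      also have "b * (a * (d * d)) = a * (b * (d * d))" using ab'[of "d * d"] cs by simp
      also have "a * (b * (c * (c * (a * (b * (d * d)))))) = b * (a * (c * (c * (a * (b * (d * d))))))"
        by (rule ab') (use cs in simp)
      finally show ?thesis unfolding Y6_def .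
    qed
    have e6: "Y6 * b = N" unfolding Y6_def N_def c(2)[symmetric] d(2)[symmetric] using cs by (simp add: asc)
    have "nu \<in> spectrum G \<longleftrightarrow> nu \<in> spectrum (Q * adj Q)"
      unfolding G_def by (rule cyc_iff[OF adj_carrier[OF Qc] Qc nu])
    also have "\<dots> \<longleftrightarrow> nu \<in> spectrum (Y5 * d)" unfolding e4 by (rule cyc_iff[OF dc Y5c nu])
    also have "\<dots> \<longleftrightarrow> nu \<in> spectrum (Y6 * b)" unfolding e5 by (rule cyc_iff[OF bc Y6c nu])
    finally show "nu \<in> spectrum G \<longleftrightarrow> nu \<in> spectrum N" unfolding e6 .
  qed
  have K3: "\<And>mu. mu \<in> spectrum M \<Longrightarrow> \<exists>nu \<in> spectrum N. Re mu \<le> Re nu"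
  proof -
    fix mu assume mu: "mu \<in> spectrum M"
    have n: "n > 0"
    proof (rule ccontr)
      assume "\<not> n > 0"
      then have "n = 0" by simp
      then show False using spec_empty[of M] Mc mu by simp
    qed
    show "\<exists>nu \<in> spectrum N. Re mu \<le> Re nu"
    proof (cases "mu = 0")
      case True
      from spectrum_non_empty[OF Nc n] obtain nu where nu: "nu \<in> spectrum N" by blast
      have "Re nu \<ge> 0"
      proof (cases "nu = 0")
        case False
        then have "nu \<in> spectrum G" using K2 nu by blast
        then obtain v where "v \<in> carrier_vec n" "v \<noteq> 0\<^sub>v n" "G *\<^sub>v v = nu \<cdot>\<^sub>v v"
          using spec_iff[OF Gc] by blast
        then show ?thesis using psd_eig(2)[OF Gpsd] by blast
      qed simp
      then show ?thesis using nu True by auto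
    next
      case False
      from sq_eig[OF Qc K1[OF mu False]] obtain l u where lu: "u \<in> carrier_vec n" "u \<noteq> 0\<^sub>v n"
        "Q *\<^sub>v u = l \<cdot>\<^sub>v u" "l * l = mu" by blast
      from rayleigh[OF Gpsd lu(1) n] obtain nu where nu: "complex_of_real nu \<in> spectrum G" "nu \<ge> 0"
        "Re ((G *\<^sub>v u) \<bullet>c u) \<le> nu * Re (u \<bullet>c u)" by blast
      have Qu: "Q *\<^sub>v u \<in> carrier_vec n" using Qc lu(1) by simp
      have "(G *\<^sub>v u) \<bullet>c u = (Q *\<^sub>v u) \<bullet>c (Q *\<^sub>v u)"
      proof -
        have "G *\<^sub>v u = adj Q *\<^sub>v (Q *\<^sub>v u)" unfolding G_def by (rule assoc_mult_mat_vec[OF adj_carrier[OF Qc] Qc lu(1)])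
        then show ?thesis using cip_adj[OF adj_carrier[OF Qc] Qu lu(1)] by simp
      qed
      also have "\<dots> = l * (cnj l * (u \<bullet>c u))" unfolding lu(3)
        using cip_smult_l[OF smult_carrier_vec[THEN iffD2, OF lu(1)] lu(1)] cip_smult_r[OF lu(1) lu(1)]
        by simp
      also have "\<dots> = complex_of_real ((cmod l)\<^sup>2) * (u \<bullet>c u)" using mult_cnj_cmod[of l] by (simp add: mult.assoc)
      finally have "Re ((G *\<^sub>v u) \<bullet>c u) = (cmod l)\<^sup>2 * Re (u \<bullet>c u)" by simp
      with nu(3) have "(cmod l)\<^sup>2 * Re (u \<bullet>c u) \<le> nu * Re (u \<bullet>c u)" by simp
      moreover have "Re (u \<bullet>c u) > 0" using cip_self_pos[OF lu(1,2)] .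
      ultimately have ln: "(cmod l)\<^sup>2 \<le> nu" by simp
      have "Re mu \<le> cmod mu" by (rule complex_Re_le_cmod)
      also have "cmod mu = (cmod l)\<^sup>2" unfolding lu(4)[symmetric] by (simp add: norm_mult power2_eq_square)
      finally have mn: "Re mu \<le> nu" using ln by simp
      have "nu \<noteq> 0"
      proof
        assume "nu = 0"
        then have "cmod l = 0" using ln by simp
        then have "mu = 0" using lu(4) by simp
        then show False using False by simp
      qed
      then have "complex_of_real nu \<in> spectrum N" using K2 nu(1) by simp
      then show ?thesis using mn by (intro bexI[of _ "complex_of_real nu"]) simp_all
    qed
  qed
  have goalM: "(mat_sqrt n R * S * mat_sqrt n R) * (mat_sqrt n R * S * mat_sqrt n R) = M"
    unfolding M_def r_def ..
  have goalN: "(mat_sqrt n R1 * S1 * mat_sqrt n R1) * (mat_sqrt n R2 * S2 * mat_sqrt n R2) = N"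
    unfolding N_def a_def b_def ..
  have finN: "finite (Re ` spectrum N)" using card_finite_spectrum(1)[OF Nc] by simp
  have "lambda1 M \<le> lambda1 N"
  proof (cases "spectrum M = {}")
    case True
    have n0: "n = 0" using spectrum_non_empty[OF Mc] True by (cases n) auto
    then have "spectrum N = {}" using spec_empty[of N] Nc by simp
    then show ?thesis using True unfolding lambda1_def by simp
  next
    case False
    have finM: "finite (Re ` spectrum M)" using card_finite_spectrum(1)[OF Mc] by simp
    have "Max (Re ` spectrum M) \<in> Re ` spectrum M" using Max_in[OF finM] False by simp
    then obtain mu where mu: "mu \<in> spectrum M" "lambda1 M = Re mu" unfolding lambda1_def by auto
    from K3[OF mu(1)] obtain nu where nu: "nu \<in> spectrum N" "Re mu \<le> Re nu" by blast
    have "Re nu \<le> lambda1 N" unfolding lambda1_def using Max_ge[OF finN] nu(1) by simp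
    then show ?thesis using mu nu by simp
  qed
  then show ?thesis unfolding goalM goalN .
qed


end
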